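(* Let $A$ be as in the context, suppose $A$ is normal and $cone(A)$ is simplicial, and let $\Delta$ be the coarsest triangulation of $cone(A)$, whose single maximal face is $cone(A)$ itself. Then there exists a cost vector $c\in\mathbb Z^n$ (generic) such that $\Delta=\Delta_c$ and $IP_{A,c}$ is a Gomory family.
   Context: $A\in\mathbb Z^{d\times n}$ has rank $d$, columns $a_1,\dots,a_n$, $cone(A)$ pointed, $\{x\in\mathbb R^n_{\ge0}:Ax=0\}=\{0\}$, $\mathbb ZA=\mathbb Z^d$, $\mathbb NA=\{Au:u\in\mathbb N^n\}$. $A$ is normal if $\mathbb NA=cone(A)\cap\mathbb Z^d$. For $c\in\mathbb R^n$, $\Delta_c$ is the collection of $\sigma\subseteq\{1,\dots,n\}$ (identified with cones $cone(A_\sigma)$) for which some $y\in\mathbb R^d$ has $y\cdot a_j=c_j$ ($j\in\sigma$), $y\cdot a_j<c_j$ ($j\notin\sigma$). A cost vector $c$ is generic if $\Delta_c$ is a triangulation and every program $IP_{A,c}(b)=\min\{c\cdot x: Ax=b,\ x\in\mathbb N^n\}$, $b\in\mathbb NA$, has a unique optimal solution; $IP_{A,c}$ is the family of these programs. For a maximal face $\sigma$ of $\Delta_c$ let $\tilde c_{\bar\sigma}=c_{\bar\sigma}-c_\sigma A_\sigma^{-1}A_{\bar\sigma}$; the group relaxation $G^\sigma(b)$ is $\min\{\tilde c_{\bar\sigma}\cdot x_{\bar\sigma}: A_\sigma x_\sigma+A_{\bar\sigma}x_{\bar\sigma}=b,\ x_{\bar\sigma}\ge0,\ x\in\mathbb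 Z^n\}$, which solves $IP_{A,c}(b)$ if its optimal solution is non-negative. $IP_{A,c}$ is a Gomory family if for every $b\in\mathbb NA$ some maximal face $\sigma$ of $\Delta_c$ has $G^\sigma(b)$ solving $IP_{A,c}(b)$. *)

theory Defs
  imports Complex_Main
begin

text \<open>The matrix A in Z^(d x n) is a function A :: nat => nat => int,
  with A i j the entry in row i (i < d) and column j (j < n); the column a_j is
  (\<lambda>i. A i j). Vectors of R^d, Z^d, R^n, N^n are functions on nat, of which only the
  coordinates below d (resp. n) are relevant.\<close>

definition RA :: "(nat \<Rightarrow> nat \<Rightarrow> int) \<Rightarrow> nat \<Rightarrow> nat \<Rightarrow> real" where
  "RA A i j = real_of_int (A i j)"

definition rcone :: "nat \<Rightarrow> (nat \<Rightarrow> nat \<Rightarrow> real) \<Rightarrow> nat set \<Rightarrow> (nat \<Rightarrow> real) \<Rightarrow> bool" where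
  "rcone d V S b \<longleftrightarrow>
     (\<exists>l::nat \<Rightarrow> real. (\<forall>j\<in>S. 0 \<le> l j) \<and> (\<forall>i<d. (\<Sum>j\<in>S. V i j * l j) = b i))"

definition lin_indep_cols :: "nat \<Rightarrow> (nat \<Rightarrow> nat \<Rightarrow> real) \<Rightarrow> nat set \<Rightarrow> bool" where
  "lin_indep_cols d V S \<longleftrightarrow>
     (\<forall>\<mu>::nat \<Rightarrow> real. (\<forall>i<d. (\<Sum>j\<in>S. V i j * \<mu> j) = 0) \<longrightarrow> (\<forall>j\<in>S. \<mu> j = 0))"

definition standing_assms :: "nat \<Rightarrow> nat \<Rightarrow> (nat \<Rightarrow> nat \<Rightarrow> int) \<Rightarrow> bool" where
  "standing_assms d n A \<longleftrightarrow>
     \<comment> \<open>rank d\<close>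
     (\<forall>b::nat \<Rightarrow> real. \<exists>x::nat \<Rightarrow> real. \<forall>i<d. (\<Sum>j<n. RA A i j * x j) = b i) \<and>
     \<comment> \<open>cone(A) pointed\<close>
     (\<forall>b::nat \<Rightarrow> real. rcone d (RA A) {..<n} b \<and> rcone d (RA A) {..<n} (\<lambda>i. - b i)
        \<longrightarrow> (\<forall>i<d. b i = 0)) \<and>
     \<comment> \<open>{x >= 0 : Ax = 0} = {0}\<close>
     (\<forall>x::nat \<Rightarrow> real. (\<forall>j<n. 0 \<le> x j) \<and> (\<forall>i<d. (\<Sum>j<n. RA A i j * x j) = 0)
        \<longrightarrow> (\<forall>j<n. x j = 0)) \<and>
     \<comment> \<open>ZA = Z^d\<close>
     (\<forall>b::nat \<Rightarrow> int. \<exists>u::nat \<Rightarrow> int. \<forall>i<d. (\<Sum>j<n. A i j * u j) = b i)"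

definition inNA :: "nat \<Rightarrow> nat \<Rightarrow> (nat \<Rightarrow> nat \<Rightarrow> int) \<Rightarrow> (nat \<Rightarrow> int) \<Rightarrow> bool" where
  "inNA d n A b \<longleftrightarrow> (\<exists>u::nat \<Rightarrow> nat. \<forall>i<d. (\<Sum>j<n. A i j * int (u j)) = b i)"

text \<open>A is normal: NA = cone(A) \<inter> Z^d (the inclusion NA \<subseteq> cone(A) \<inter> Z^d always holds).\<close>
definition normal_mat :: "nat \<Rightarrow> nat \<Rightarrow> (nat \<Rightarrow> nat \<Rightarrow> int) \<Rightarrow> bool" where
  "normal_mat d n A \<longleftrightarrow>
     (\<forall>b::nat \<Rightarrow> int. rcone d (RA A) {..<n} (\<lambda>i. real_of_int (b i)) \<longrightarrow> inNA d n A b)"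

definition simplicial_cone :: "nat \<Rightarrow> nat \<Rightarrow> (nat \<Rightarrow> nat \<Rightarrow> int) \<Rightarrow> bool" where
  "simplicial_cone d n A \<longleftrightarrow>
     (\<exists>V::nat \<Rightarrow> nat \<Rightarrow> real. lin_indep_cols d V {..<d} \<and>
        (\<forall>b. rcone d V {..<d} b \<longleftrightarrow> rcone d (RA A) {..<n} b))"

definition triangulation :: "nat \<Rightarrow> nat \<Rightarrow> (nat \<Rightarrow> nat \<Rightarrow> int) \<Rightarrow> nat set set \<Rightarrow> bool" where
  "triangulation d n A \<Delta> \<longleftrightarrow>
     \<Delta> \<noteq> {} \<and>
     (\<forall>\<sigma>\<in>\<Delta>. \<sigma> \<subseteq> {..<n}) \<and>
     (\<forall>\<sigma>\<in>\<Delta>. \<forall>\<tau>. \<tau> \<subseteq> \<sigma> \<longrightarrow> \<tau> \<in> \<Delta>) \<and>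
     (\<forall>\<sigma>\<in>\<Delta>. lin_indep_cols d (RA A) \<sigma>) \<and>
     (\<forall>b. rcone d (RA A) {..<n} b \<longleftrightarrow> (\<exists>\<sigma>\<in>\<Delta>. rcone d (RA A) \<sigma> b)) \<and>
     (\<forall>\<sigma>\<in>\<Delta>. \<forall>\<tau>\<in>\<Delta>. \<forall>b.
        (rcone d (RA A) \<sigma> b \<and> rcone d (RA A) \<tau> b) \<longleftrightarrow> rcone d (RA A) (\<sigma> \<inter> \<tau>) b)"

definition maximal_face :: "nat set set \<Rightarrow> nat set \<Rightarrow> bool" where
  "maximal_face \<Delta> \<sigma> \<longleftrightarrow> \<sigma> \<in> \<Delta> \<and> (\<forall>\<tau>\<in>\<Delta>. \<sigma> \<subseteq> \<tau> \<longrightarrow> \<tau> = \<sigma>)"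

definition coarsest_triangulation :: "nat \<Rightarrow> nat \<Rightarrow> (nat \<Rightarrow> nat \<Rightarrow> int) \<Rightarrow> nat set set \<Rightarrow> bool" where
  "coarsest_triangulation d n A \<Delta> \<longleftrightarrow>
     triangulation d n A \<Delta> \<and>
     (\<exists>\<sigma>. {\<tau>. maximal_face \<Delta> \<tau>} = {\<sigma>} \<and>
          (\<forall>b. rcone d (RA A) \<sigma> b \<longleftrightarrow> rcone d (RA A) {..<n} b))"

definition Delta_c :: "nat \<Rightarrow> nat \<Rightarrow> (nat \<Rightarrow> nat \<Rightarrow> int) \<Rightarrow> (nat \<Rightarrow> real) \<Rightarrow> nat set set" where
  "Delta_c d n A c = {\<sigma>. \<sigma> \<subseteq> {..<n} \<and>
     (\<exists>y::nat \<Rightarrow> real. (\<forall>j\<in>\<sigma>. (\<Sum>i<d. y i * RA A i j) = c j) \<and>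
                      (\<forall>j\<in>{..<n} - \<sigma>. (\<Sum>i<d. y i * RA A i j) < c j))}"

definition ip_feasible :: "nat \<Rightarrow> nat \<Rightarrow> (nat \<Rightarrow> nat \<Rightarrow> int) \<Rightarrow> (nat \<Rightarrow> int) \<Rightarrow> (nat \<Rightarrow> nat) \<Rightarrow> bool" where
  "ip_feasible d n A b u \<longleftrightarrow>
     (\<forall>j\<ge>n. u j = 0) \<and> (\<forall>i<d. (\<Sum>j<n. A i j * int (u j)) = b i)"

definition ip_optimal :: "nat \<Rightarrow> nat \<Rightarrow> (nat \<Rightarrow> nat \<Rightarrow> int) \<Rightarrow> (nat \<Rightarrow> real) \<Rightarrow> (nat \<Rightarrow> int)
    \<Rightarrow> (nat \<Rightarrow> nat) \<Rightarrow> bool" where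
  "ip_optimal d n A c b u \<longleftrightarrow> ip_feasible d n A b u \<and>
     (\<forall>v. ip_feasible d n A b v \<longrightarrow> (\<Sum>j<n. c j * real (u j)) \<le> (\<Sum>j<n. c j * real (v j)))"

definition generic_cost :: "nat \<Rightarrow> nat \<Rightarrow> (nat \<Rightarrow> nat \<Rightarrow> int) \<Rightarrow> (nat \<Rightarrow> real) \<Rightarrow> bool" where
  "generic_cost d n A c \<longleftrightarrow>
     triangulation d n A (Delta_c d n A c) \<and>
     (\<forall>b. inNA d n A b \<longrightarrow> (\<exists>!u. ip_optimal d n A c b u))"

text \<open>c_sigma A_sigma^(-1): the unique y in R^d with y . a_j = c_j for j in sigma
  (coordinates beyond d set to 0).\<close>
definition dual_vec :: "nat \<Rightarrow> (nat \<Rightarrow> nat \<Rightarrow> int) \<Rightarrow> (nat \<Rightarrow> real) \<Rightarrow> nat set \<Rightarrow> nat \<Rightarrow> real" where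
  "dual_vec d A c \<sigma> = (THE y. (\<forall>j\<in>\<sigma>. (\<Sum>i<d. y i * RA A i j) = c j) \<and> (\<forall>i\<ge>d. y i = 0))"

definition reduced_cost :: "nat \<Rightarrow> (nat \<Rightarrow> nat \<Rightarrow> int) \<Rightarrow> (nat \<Rightarrow> real) \<Rightarrow> nat set \<Rightarrow> nat \<Rightarrow> real" where
  "reduced_cost d A c \<sigma> j = c j - (\<Sum>i<d. dual_vec d A c \<sigma> i * RA A i j)"

definition gr_feasible :: "nat \<Rightarrow> nat \<Rightarrow> (nat \<Rightarrow> nat \<Rightarrow> int) \<Rightarrow> nat set \<Rightarrow> (nat \<Rightarrow> int)
    \<Rightarrow> (nat \<Rightarrow> int) \<Rightarrow> bool" where
  "gr_feasible d n A \<sigma> b x \<longleftrightarrow>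
     (\<forall>j\<ge>n. x j = 0) \<and> (\<forall>j\<in>{..<n} - \<sigma>. 0 \<le> x j) \<and>
     (\<forall>i<d. (\<Sum>j<n. A i j * x j) = b i)"

definition gr_optimal :: "nat \<Rightarrow> nat \<Rightarrow> (nat \<Rightarrow> nat \<Rightarrow> int) \<Rightarrow> (nat \<Rightarrow> real) \<Rightarrow> nat set
    \<Rightarrow> (nat \<Rightarrow> int) \<Rightarrow> (nat \<Rightarrow> int) \<Rightarrow> bool" where
  "gr_optimal d n A c \<sigma> b x \<longleftrightarrow> gr_feasible d n A \<sigma> b x \<and>
     (\<forall>x'. gr_feasible d n A \<sigma> b x' \<longrightarrow>
        (\<Sum>j\<in>{..<n} - \<sigma>. reduced_cost d A c \<sigma> j * real_of_int (x j))
          \<le> (\<Sum>j\<in>{..<n} - \<sigma>. reduced_cost d A c \<sigma> j * real_of_int (x' j)))"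

text \<open>G^sigma(b) solves IP_{A,c}(b): its optimal solution is non-negative.\<close>
definition gr_solves :: "nat \<Rightarrow> nat \<Rightarrow> (nat \<Rightarrow> nat \<Rightarrow> int) \<Rightarrow> (nat \<Rightarrow> real) \<Rightarrow> nat set
    \<Rightarrow> (nat \<Rightarrow> int) \<Rightarrow> bool" where
  "gr_solves d n A c \<sigma> b \<longleftrightarrow> (\<exists>x. gr_optimal d n A c \<sigma> b x \<and> (\<forall>j. 0 \<le> x j))"

definition gomory_family :: "nat \<Rightarrow> nat \<Rightarrow> (nat \<Rightarrow> nat \<Rightarrow> int) \<Rightarrow> (nat \<Rightarrow> real) \<Rightarrow> bool" where
  "gomory_family d n A c \<longleftrightarrow>
     (\<forall>b. inNA d n A b \<longrightarrow>
        (\<exists>\<sigma>. maximal_face (Delta_c d n A c) \<sigma> \<and> gr_solves d n A c \<sigma> b))"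

end

theory Submission
  imports Defs "HOL-Library.FuncSet"
begin

lemma lin_indepD:
  assumes "lin_indep_cols d V S" "\<forall>i<d. (\<Sum>j\<in>S. V i j * m j) = 0" "j \<in> S"
  shows "m j = 0"
  using assms unfolding lin_indep_cols_def by blast

lemma exists_sigma:
  assumes sc: "simplicial_cone d n A"
  shows "\<exists>\<sigma>. \<sigma> \<subseteq> {..<n} \<and> lin_indep_cols d (RA A) \<sigma> \<and>
           (\<forall>b. rcone d (RA A) \<sigma> b \<longleftrightarrow> rcone d (RA A) {..<n} b)"
proof -
  obtain V where li: "lin_indep_cols d V {..<d}" and ceq: "\<And>b. rcone d V {..<d} b \<longleftrightarrow> rcone d (RA A) {..<n} b"
    using sc unfolding simplicial_cone_def by blast
  have "\<exists>m. (\<forall>k<d. 0 \<le> m k) \<and> (\<forall>i<d. (\<Sum>k<d. V i k * m k) = RA A i j)" if j: "j < n" for j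
  proof -
    have "rcone d (RA A) {..<n} (\<lambda>i. RA A i j)"
      unfolding rcone_def
      by (rule exI[of _ "\<lambda>j'. if j' = j then 1 else 0"]) (simp add: j if_distrib sum.delta' cong: if_cong)
    then have "rcone d V {..<d} (\<lambda>i. RA A i j)" using ceq by blast
    then show ?thesis
      unfolding rcone_def by auto
  qed
  then have "\<forall>j. \<exists>m. j < n \<longrightarrow> (\<forall>k<d. 0 \<le> m k) \<and> (\<forall>i<d. (\<Sum>k<d. V i k * m k) = RA A i j)" by blast
  from choice[OF this] obtain \<mu> where mu: "\<And>j. j < n \<Longrightarrow> (\<forall>k<d. 0 \<le> \<mu> j k) \<and> (\<forall>i<d. (\<Sum>k<d. V i k * \<mu> j k) = RA A i j)"
    by blast
  have "\<exists>l. (\<forall>j<n. 0 \<le> l j) \<and> (\<forall>i<d. (\<Sum>j<n. RA A i j * l j) = V i k)" if k: "k < d" for k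
  proof -
    have "rcone d V {..<d} (\<lambda>i. V i k)"
      unfolding rcone_def
      by (rule exI[of _ "\<lambda>j'. if j' = k then 1 else 0"]) (simp add: k if_distrib sum.delta' cong: if_cong)
    then have "rcone d (RA A) {..<n} (\<lambda>i. V i k)" using ceq by blast
    then show ?thesis
      unfolding rcone_def by auto
  qed
  then have "\<forall>k. \<exists>l. k < d \<longrightarrow> (\<forall>j<n. 0 \<le> l j) \<and> (\<forall>i<d. (\<Sum>j<n. RA A i j * l j) = V i k)" by blast
  from choice[OF this] obtain lam where la: "\<And>k. k < d \<Longrightarrow> (\<forall>j<n. 0 \<le> lam k j) \<and> (\<forall>i<d. (\<Sum>j<n. RA A i j * lam k j) = V i k)"
    by blast
  have prod: "(\<Sum>j<n. lam k j * \<mu> j l) = (if l = k then 1 else 0)" if k: "k < d" and l: "l < d" for k l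
  proof -
    define m where "m l' = (\<Sum>j<n. lam k j * \<mu> j l') - (if l' = k then 1 else 0)" for l'
    have "\<forall>i<d. (\<Sum>l'<d. V i l' * m l') = 0"
    proof (intro allI impI)
      fix i assume i: "i < d"
      have "(\<Sum>l'<d. V i l' * m l') = (\<Sum>l'<d. V i l' * (\<Sum>j<n. lam k j * \<mu> j l')) - (\<Sum>l'<d. V i l' * (if l' = k then 1 else 0))"
        unfolding m_def by (simp add: right_diff_distrib sum_subtractf)
      also have "(\<Sum>l'<d. V i l' * (\<Sum>j<n. lam k j * \<mu> j l')) = (\<Sum>j<n. lam k j * (\<Sum>l'<d. V i l' * \<mu> j l'))"
        unfolding sum_distrib_left by (subst sum.swap) (simp add: mult_ac)
      also have "\<dots> = (\<Sum>j<n. RA A i j * lam k j)"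
        by (rule sum.cong) (simp_all add: mu i mult.commute)
      also have "\<dots> = V i k" using la[OF k] i by blast
      also have "(\<Sum>l'<d. V i l' * (if l' = k then 1 else 0)) = V i k"
        using k by (simp add: if_distrib sum.delta' cong: if_cong)
      finally show "(\<Sum>l'<d. V i l' * m l') = 0" by simp
    qed
    then have "\<forall>l'\<in>{..<d}. m l' = 0" using li unfolding lin_indep_cols_def by blast
    then show ?thesis using l unfolding m_def by auto
  qed
  have nn: "0 \<le> lam k j * \<mu> j l" if "k < d" "l < d" "j < n" for k j l
    using la mu that by simp
  have "\<exists>j. j < n \<and> 0 < \<mu> j k \<and> (\<forall>l<d. l \<noteq> k \<longrightarrow> \<mu> j l = 0)" if k: "k < d" for k
  proof -
    have "(\<Sum>j<n. lam k j * \<mu> j k) = 1" using prod[OF k k] by simp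
    then have "(\<Sum>j<n. lam k j * \<mu> j k) \<noteq> 0" by simp
    then obtain j where j: "j < n" and ne: "lam k j * \<mu> j k \<noteq> 0"
      by (rule sum.not_neutral_contains_not_neutral) simp
    have lpos: "0 < lam k j" and mpos: "0 < \<mu> j k"
      using ne la[OF k] mu[OF j] j k by (auto simp: less_le)
    have "\<mu> j l = 0" if l: "l < d" "l \<noteq> k" for l
    proof -
      have "(\<Sum>j<n. lam k j * \<mu> j l) = 0" using prod[OF k l(1)] l by simp
      then have "\<forall>j'\<in>{..<n}. lam k j' * \<mu> j' l = 0"
        using sum_nonneg_eq_0_iff[of "{..<n}" "\<lambda>j'. lam k j' * \<mu> j' l"] nn[OF k l(1)] by auto
      then have "lam k j * \<mu> j l = 0" using j by blast
      then show ?thesis using lpos by simp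
    qed
    then show ?thesis
      using j mpos by blast
  qed
  then have "\<forall>k. \<exists>j. k < d \<longrightarrow> j < n \<and> 0 < \<mu> j k \<and> (\<forall>l<d. l \<noteq> k \<longrightarrow> \<mu> j l = 0)" by blast
  from choice[OF this] obtain f where f: "\<And>k. k < d \<Longrightarrow> f k < n \<and> 0 < \<mu> (f k) k \<and> (\<forall>l<d. l \<noteq> k \<longrightarrow> \<mu> (f k) l = 0)"
    by blast
  have colf: "RA A i (f k) = V i k * \<mu> (f k) k" if "i < d" "k < d" for i k
  proof -
    have "RA A i (f k) = (\<Sum>l<d. V i l * \<mu> (f k) l)" using mu f that by simp
    also have "\<dots> = (\<Sum>l<d. if l = k then V i k * \<mu> (f k) k else 0)"
      by (rule sum.cong) (use f that in auto)
    also have "\<dots> = V i k * \<mu> (f k) k" using that by simp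
    finally show ?thesis .
  qed
  have inj: "inj_on f {..<d}"
  proof (rule inj_onI)
    fix k k' assume "k \<in> {..<d}" "k' \<in> {..<d}" "f k = f k'"
    then have k: "k < d" "k' < d" and e: "f k = f k'" by auto
    show "k = k'"
    proof (rule ccontr)
      assume "k \<noteq> k'"
      then have "\<mu> (f k) k' = 0" using f[OF k(1)] k(2) by auto
      moreover have "0 < \<mu> (f k') k'" using f[OF k(2)] by blast
      ultimately show False using e by simp
    qed
  qed
  define \<sigma> where "\<sigma> = f ` {..<d}"
  have sub: "\<sigma> \<subseteq> {..<n}" unfolding \<sigma>_def using f by auto
  have reix: "(\<Sum>j\<in>\<sigma>. g j) = (\<Sum>k<d. g (f k))" for g :: "nat \<Rightarrow> real"
    unfolding \<sigma>_def by (simp add: sum.reindex[OF inj])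
  have lin: "lin_indep_cols d (RA A) \<sigma>"
    unfolding lin_indep_cols_def
  proof (intro allI impI ballI)
    fix m :: "nat \<Rightarrow> real" and j
    assume h: "\<forall>i<d. (\<Sum>j\<in>\<sigma>. RA A i j * m j) = 0" and j: "j \<in> \<sigma>"
    have "\<forall>i<d. (\<Sum>k<d. V i k * (\<mu> (f k) k * m (f k))) = 0"
    proof (intro allI impI)
      fix i assume i: "i < d"
      have "(\<Sum>k<d. V i k * (\<mu> (f k) k * m (f k))) = (\<Sum>k<d. RA A i (f k) * m (f k))"
        by (rule sum.cong) (simp_all add: colf i mult_ac)
      also have "\<dots> = 0" using h i reix[of "\<lambda>j. RA A i j * m j"] by simp
      finally show "(\<Sum>k<d. V i k * (\<mu> (f k) k * m (f k))) = 0" .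
    qed
    then have "\<forall>k\<in>{..<d}. \<mu> (f k) k * m (f k) = 0"
      using lin_indepD[OF li, of "\<lambda>k. \<mu> (f k) k * m (f k)"] by blast
    moreover obtain k where k: "k < d" "j = f k" using j unfolding \<sigma>_def by auto
    ultimately have "\<mu> (f k) k * m (f k) = 0" by simp
    moreover have "0 < \<mu> (f k) k" using f[OF k(1)] by blast
    ultimately show "m j = 0" using k(2) by simp
  qed
  have cone: "rcone d (RA A) \<sigma> b \<longleftrightarrow> rcone d (RA A) {..<n} b" for b
  proof
    assume "rcone d (RA A) \<sigma> b"
    then obtain l where l: "\<forall>j\<in>\<sigma>. 0 \<le> l j" "\<forall>i<d. (\<Sum>j\<in>\<sigma>. RA A i j * l j) = b i"
      unfolding rcone_def by blast
    show "rcone d (RA A) {..<n} b" unfolding rcone_def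
    proof (rule exI[of _ "\<lambda>j. if j \<in> \<sigma> then l j else 0"], intro conjI allI impI ballI)
      fix j show "0 \<le> (if j \<in> \<sigma> then l j else 0)" using l by auto
    next
      fix i assume i: "i < d"
      have "(\<Sum>j<n. RA A i j * (if j \<in> \<sigma> then l j else 0)) = (\<Sum>j\<in>\<sigma>. RA A i j * (if j \<in> \<sigma> then l j else 0))"
        by (rule sum.mono_neutral_right) (use sub in auto)
      also have "\<dots> = b i" using l i by simp
      finally show "(\<Sum>j<n. RA A i j * (if j \<in> \<sigma> then l j else 0)) = b i" .
    qed
  next
    assume "rcone d (RA A) {..<n} b"
    then have "rcone d V {..<d} b" using ceq by blast
    then obtain l where l: "\<forall>k\<in>{..<d}. 0 \<le> l k" "\<forall>i<d. (\<Sum>k<d. V i k * l k) = b i"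
      unfolding rcone_def by blast
    define g where "g = inv_into {..<d} f"
    have gf: "g (f k) = k" if "k < d" for k unfolding g_def using inj that by simp
    show "rcone d (RA A) \<sigma> b" unfolding rcone_def
    proof (rule exI[of _ "\<lambda>j. l (g j) / \<mu> j (g j)"], intro conjI allI impI ballI)
      fix j assume "j \<in> \<sigma>"
      then obtain k where "k < d" "j = f k" unfolding \<sigma>_def by auto
      moreover have "0 \<le> l k" "0 < \<mu> (f k) k" using l f \<open>k < d\<close> by auto
      ultimately show "0 \<le> l (g j) / \<mu> j (g j)" using gf by simp
    next
      fix i assume i: "i < d"
      have "(\<Sum>j\<in>\<sigma>. RA A i j * (l (g j) / \<mu> j (g j))) = (\<Sum>k<d. RA A i (f k) * (l k / \<mu> (f k) k))"
        by (simp add: reix gf)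
      also have "\<dots> = (\<Sum>k<d. V i k * l k)"
      proof (rule sum.cong)
        fix k assume k: "k \<in> {..<d}"
        then have "0 < \<mu> (f k) k" using f by blast
        then show "RA A i (f k) * (l k / \<mu> (f k) k) = V i k * l k" using k by (simp add: colf i)
      qed simp
      also have "\<dots> = b i" using l i by simp
      finally show "(\<Sum>j\<in>\<sigma>. RA A i j * (l (g j) / \<mu> j (g j))) = b i" .
    qed
  qed
  show ?thesis using sub lin cone by blast
qed


lemma digits_bound:
  fixes R :: int
  assumes "1 \<le> R" "\<forall>j<n. 0 \<le> z j \<and> z j < R"
  shows "0 \<le> (\<Sum>j<n. R ^ j * z j) \<and> (\<Sum>j<n. R ^ j * z j) < R ^ n"
  using assms(2)
proof (induction n)
  case 0 then show ?case by simp
next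
  case (Suc n)
  then have IH: "0 \<le> (\<Sum>j<n. R ^ j * z j)" "(\<Sum>j<n. R ^ j * z j) < R ^ n" by auto
  have z: "0 \<le> z n" "z n \<le> R - 1" using Suc.prems by auto
  have p: "0 < R ^ n" using assms(1) by simp
  have "R ^ n * z n \<le> R ^ n * (R - 1)" using z p by (intro mult_left_mono) auto
  moreover have "0 \<le> R ^ n * z n" using z p by simp
  ultimately show ?case using IH by (simp add: algebra_simps)
qed

lemma digits_inj:
  fixes R :: int
  assumes "1 \<le> R" "\<forall>j<n. 0 \<le> z j \<and> z j < R" "\<forall>j<n. 0 \<le> z' j \<and> z' j < R"
    and "(\<Sum>j<n. R ^ j * z j) = (\<Sum>j<n. R ^ j * z' j)"
  shows "\<forall>j<n. z j = z' j"
  using assms(2-4)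
proof (induction n)
  case 0 then show ?case by simp
next
  case (Suc n)
  have b1: "0 \<le> (\<Sum>j<n. R ^ j * z j) \<and> (\<Sum>j<n. R ^ j * z j) < R ^ n"
    by (rule digits_bound) (use assms(1) Suc.prems in auto)
  have b2: "0 \<le> (\<Sum>j<n. R ^ j * z' j) \<and> (\<Sum>j<n. R ^ j * z' j) < R ^ n"
    by (rule digits_bound) (use assms(1) Suc.prems in auto)
  have e: "(\<Sum>j<n. R ^ j * z j) + R ^ n * z n = (\<Sum>j<n. R ^ j * z' j) + R ^ n * z' n"
    using Suc.prems(3) by simp
  have p: "0 < R ^ n" using assms(1) by simp
  have d1: "((\<Sum>j<n. R ^ j * z j) + R ^ n * z n) div R ^ n = z n"
  proof -
    have "((\<Sum>j<n. R ^ j * z j) + z n * R ^ n) div R ^ n = z n + (\<Sum>j<n. R ^ j * z j) div R ^ n"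
      by (intro div_mult_self1) (use p in linarith)
    moreover have "(\<Sum>j<n. R ^ j * z j) div R ^ n = 0" using b1 by (intro div_pos_pos_trivial) auto
    ultimately show ?thesis by (simp add: mult.commute)
  qed
  have d2: "((\<Sum>j<n. R ^ j * z' j) + R ^ n * z' n) div R ^ n = z' n"
  proof -
    have "((\<Sum>j<n. R ^ j * z' j) + z' n * R ^ n) div R ^ n = z' n + (\<Sum>j<n. R ^ j * z' j) div R ^ n"
      by (intro div_mult_self1) (use p in linarith)
    moreover have "(\<Sum>j<n. R ^ j * z' j) div R ^ n = 0" using b2 by (intro div_pos_pos_trivial) auto
    ultimately show ?thesis by (simp add: mult.commute)
  qed
  have zn: "z n = z' n" using d1 d2 e by simp
  then have "(\<Sum>j<n. R ^ j * z j) = (\<Sum>j<n. R ^ j * z' j)" using e by simp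
  moreover have p1: "\<forall>j<n. 0 \<le> z j \<and> z j < R" using Suc.prems(1) by simp
  moreover have p2: "\<forall>j<n. 0 \<le> z' j \<and> z' j < R" using Suc.prems(2) by simp
  ultimately have "\<forall>j<n. z j = z' j" using Suc.IH by blast
  then show ?case using zn by (auto simp: less_Suc_eq)
qed


locale sig =
  fixes d n :: nat and A :: "nat \<Rightarrow> nat \<Rightarrow> int" and \<sigma> :: "nat set"
  assumes std: "standing_assms d n A" and nrm: "normal_mat d n A"
    and sub: "\<sigma> \<subseteq> {..<n}" and li: "lin_indep_cols d (RA A) \<sigma>"
    and ceq: "\<And>b. rcone d (RA A) \<sigma> b \<longleftrightarrow> rcone d (RA A) {..<n} b"
begin

lemma fin: "finite \<sigma>" using sub finite_subset by blast

definition col :: "nat \<Rightarrow> nat \<Rightarrow> real" where "col j = (\<lambda>i. RA A i j)"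

lemma col_cone: "j < n \<Longrightarrow> rcone d (RA A) \<sigma> (col j)"
proof -
  assume j: "j < n"
  have "rcone d (RA A) {..<n} (col j)"
    unfolding rcone_def col_def
    by (rule exI[of _ "\<lambda>j'. if j' = j then 1 else 0"]) (simp add: j if_distrib cong: if_cong)
  then show ?thesis using ceq by blast
qed

lemma span: "\<exists>l. \<forall>i<d. (\<Sum>j\<in>\<sigma>. RA A i j * l j) = b i"
proof -
  obtain x where x: "\<And>i. i < d \<Longrightarrow> (\<Sum>j<n. RA A i j * x j) = b i"
    using std unfolding standing_assms_def by blast
  have "\<exists>L. (\<forall>i<d. (\<Sum>k\<in>\<sigma>. RA A i k * L k) = RA A i j)" if "j < n" for j
    using col_cone[OF that] unfolding rcone_def col_def by blast
  then have "\<forall>j. \<exists>L. j < n \<longrightarrow> (\<forall>i<d. (\<Sum>k\<in>\<sigma>. RA A i k * L k) = RA A i j)" by blast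
  from choice[OF this] obtain L where L: "\<And>j i. j < n \<Longrightarrow> i < d \<Longrightarrow> (\<Sum>k\<in>\<sigma>. RA A i k * L j k) = RA A i j"
    by blast
  show ?thesis
  proof (rule exI[of _ "\<lambda>k. \<Sum>j<n. x j * L j k"], intro allI impI)
    fix i assume i: "i < d"
    have "(\<Sum>k\<in>\<sigma>. RA A i k * (\<Sum>j<n. x j * L j k)) = (\<Sum>j<n. x j * (\<Sum>k\<in>\<sigma>. RA A i k * L j k))"
      unfolding sum_distrib_left by (subst sum.swap) (simp add: mult_ac)
    also have "\<dots> = (\<Sum>j<n. RA A i j * x j)"
    proof (rule sum.cong)
      fix j assume "j \<in> {..<n}"
      then show "x j * (\<Sum>k\<in>\<sigma>. RA A i k * L j k) = RA A i j * x j" using L[of j i] i by simp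
    qed simp
    also have "\<dots> = b i" using x i by simp
    finally show "(\<Sum>k\<in>\<sigma>. RA A i k * (\<Sum>j<n. x j * L j k)) = b i" .
  qed
qed

definition co :: "(nat \<Rightarrow> real) \<Rightarrow> nat \<Rightarrow> real" where
  "co b = (SOME l. (\<forall>i<d. (\<Sum>j\<in>\<sigma>. RA A i j * l j) = b i) \<and> (\<forall>j. j \<notin> \<sigma> \<longrightarrow> l j = 0))"

lemma co_spec: "(\<forall>i<d. (\<Sum>j\<in>\<sigma>. RA A i j * co b j) = b i) \<and> (\<forall>j. j \<notin> \<sigma> \<longrightarrow> co b j = 0)"
proof -
  obtain l where l: "\<forall>i<d. (\<Sum>j\<in>\<sigma>. RA A i j * l j) = b i" using span by blast
  define l' where "l' j = (if j \<in> \<sigma> then l j else 0)" for j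
  have ll: "(\<Sum>j\<in>\<sigma>. RA A i j * l' j) = (\<Sum>j\<in>\<sigma>. RA A i j * l j)" for i
    by (rule sum.cong) (simp_all add: l'_def)
  define P where "P l \<longleftrightarrow> (\<forall>i<d. (\<Sum>j\<in>\<sigma>. RA A i j * l j) = b i) \<and> (\<forall>j. j \<notin> \<sigma> \<longrightarrow> l j = 0)" for l
  have "P l'" unfolding P_def using l ll by (simp add: l'_def)
  then have "P (SOME l. P l)" by (rule someI[of P l'])
  moreover have "co b = (SOME l. P l)" unfolding co_def P_def ..
  ultimately show ?thesis unfolding P_def by simp
qed

lemma co_eq: "i < d \<Longrightarrow> (\<Sum>j\<in>\<sigma>. RA A i j * co b j) = b i"
  using co_spec by blast

lemma co_out: "j \<notin> \<sigma> \<Longrightarrow> co b j = 0"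
  using co_spec by blast

lemma co_uniq:
  assumes "\<forall>i<d. (\<Sum>j\<in>\<sigma>. RA A i j * l j) = b i" "k \<in> \<sigma>"
  shows "l k = co b k"
proof -
  have "\<forall>i<d. (\<Sum>j\<in>\<sigma>. RA A i j * (l j - co b j)) = 0"
    using assms(1) co_eq by (simp add: right_diff_distrib sum_subtractf)
  from lin_indepD[OF li this assms(2)] show ?thesis by simp
qed

lemma co_cong: "(\<And>i. i < d \<Longrightarrow> b i = b' i) \<Longrightarrow> co b = co b'"
  unfolding co_def by (rule arg_cong[where f = Eps]) (auto intro!: ext)

lemma co_sum:
  assumes "finite I" "k \<in> \<sigma>"
  shows "co (\<lambda>i. \<Sum>m\<in>I. t m * w m i) k = (\<Sum>m\<in>I. t m * co (w m) k)"
proof -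
  have "\<forall>i<d. (\<Sum>j\<in>\<sigma>. RA A i j * (\<Sum>m\<in>I. t m * co (w m) j)) = (\<Sum>m\<in>I. t m * w m i)"
  proof (intro allI impI)
    fix i assume i: "i < d"
    have "(\<Sum>j\<in>\<sigma>. RA A i j * (\<Sum>m\<in>I. t m * co (w m) j)) = (\<Sum>m\<in>I. t m * (\<Sum>j\<in>\<sigma>. RA A i j * co (w m) j))"
      unfolding sum_distrib_left by (subst sum.swap) (simp add: mult_ac)
    also have "\<dots> = (\<Sum>m\<in>I. t m * w m i)" using co_eq[OF i] by simp
    finally show "(\<Sum>j\<in>\<sigma>. RA A i j * (\<Sum>m\<in>I. t m * co (w m) j)) = (\<Sum>m\<in>I. t m * w m i)" .
  qed
  from co_uniq[OF this assms(2)] show ?thesis by simp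
qed

lemma co_col_sigma: "j \<in> \<sigma> \<Longrightarrow> k \<in> \<sigma> \<Longrightarrow> co (col j) k = (if k = j then 1 else 0)"
proof -
  assume j: "j \<in> \<sigma>" and k: "k \<in> \<sigma>"
  have "\<forall>i<d. (\<Sum>j'\<in>\<sigma>. RA A i j' * (\<lambda>j'. if j' = j then 1 else 0) j') = col j i"
    using j fin by (simp add: col_def if_distrib cong: if_cong)
  from co_uniq[OF this k] show ?thesis by simp
qed

lemma rcone_sigma_co: "rcone d (RA A) \<sigma> b \<Longrightarrow> k \<in> \<sigma> \<Longrightarrow> 0 \<le> co b k"
proof -
  assume "rcone d (RA A) \<sigma> b" "k \<in> \<sigma>"
  then obtain l where l: "\<forall>j\<in>\<sigma>. 0 \<le> l j" "\<forall>i<d. (\<Sum>j\<in>\<sigma>. RA A i j * l j) = b i"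
    unfolding rcone_def by blast
  have "l k = co b k" by (rule co_uniq[OF l(2) \<open>k \<in> \<sigma>\<close>])
  moreover have "0 \<le> l k" using l(1) \<open>k \<in> \<sigma>\<close> by blast
  ultimately show ?thesis by simp
qed

lemma co_col_nonneg: "j < n \<Longrightarrow> 0 \<le> co (col j) k"
  using rcone_sigma_co[OF col_cone] co_out by (cases "k \<in> \<sigma>") auto

lemma co_Ax:
  assumes k: "k \<in> \<sigma>"
  shows "co (\<lambda>i. \<Sum>j<n. RA A i j * x j) k = x k + (\<Sum>j\<in>{..<n}-\<sigma>. x j * co (col j) k)"
proof -
  have "co (\<lambda>i. \<Sum>j<n. RA A i j * x j) k = co (\<lambda>i. \<Sum>j<n. x j * col j i) k"
    by (simp add: col_def mult.commute)
  also have "\<dots> = (\<Sum>j<n. x j * co (col j) k)" by (rule co_sum) (simp_all add: k)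
  also have "\<dots> = (\<Sum>j\<in>\<sigma>. x j * co (col j) k) + (\<Sum>j\<in>{..<n}-\<sigma>. x j * co (col j) k)"
    using sum.subset_diff[OF sub, of "\<lambda>j. x j * co (col j) k"] by simp
  also have "(\<Sum>j\<in>\<sigma>. x j * co (col j) k) = (\<Sum>j\<in>\<sigma>. if j = k then x k else 0)"
    by (rule sum.cong) (simp_all add: co_col_sigma k)
  also have "\<dots> = x k" using k fin by simp
  finally show ?thesis .
qed

lemma rcone_sub_iff:
  assumes t: "\<tau> \<subseteq> \<sigma>"
  shows "rcone d (RA A) \<tau> b \<longleftrightarrow> (\<forall>k\<in>\<sigma>. 0 \<le> co b k) \<and> (\<forall>k\<in>\<sigma>-\<tau>. co b k = 0)"
proof
  assume "rcone d (RA A) \<tau> b"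
  then obtain l where l: "\<forall>j\<in>\<tau>. 0 \<le> l j" "\<forall>i<d. (\<Sum>j\<in>\<tau>. RA A i j * l j) = b i"
    unfolding rcone_def by blast
  define l' where "l' j = (if j \<in> \<tau> then l j else 0)" for j
  have "\<forall>i<d. (\<Sum>j\<in>\<sigma>. RA A i j * l' j) = b i"
  proof (intro allI impI)
    fix i assume i: "i < d"
    have "(\<Sum>j\<in>\<sigma>. RA A i j * l' j) = (\<Sum>j\<in>\<tau>. RA A i j * l' j)"
      by (rule sum.mono_neutral_right) (use fin t in \<open>auto simp: l'_def\<close>)
    also have "\<dots> = b i" using l i by (simp add: l'_def)
    finally show "(\<Sum>j\<in>\<sigma>. RA A i j * l' j) = b i" .
  qed
  from co_uniq[OF this] have eq: "k \<in> \<sigma> \<Longrightarrow> l' k = co b k" for k by blast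
  show "(\<forall>k\<in>\<sigma>. 0 \<le> co b k) \<and> (\<forall>k\<in>\<sigma>-\<tau>. co b k = 0)"
  proof (intro conjI ballI)
    fix k assume k: "k \<in> \<sigma>"
    show "0 \<le> co b k" using eq[OF k] l(1) by (cases "k \<in> \<tau>") (auto simp: l'_def)
  next
    fix k assume k: "k \<in> \<sigma> - \<tau>"
    then show "co b k = 0" using eq[of k] by (simp add: l'_def)
  qed
next
  assume h: "(\<forall>k\<in>\<sigma>. 0 \<le> co b k) \<and> (\<forall>k\<in>\<sigma>-\<tau>. co b k = 0)"
  show "rcone d (RA A) \<tau> b" unfolding rcone_def
  proof (rule exI[of _ "co b"], intro conjI allI impI ballI)
    fix j assume "j \<in> \<tau>" then show "0 \<le> co b j" using h t by auto
  next
    fix i assume i: "i < d"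
    have "(\<Sum>j\<in>\<tau>. RA A i j * co b j) = (\<Sum>j\<in>\<sigma>. RA A i j * co b j)"
      by (rule sum.mono_neutral_left) (use fin t h in auto)
    also have "\<dots> = b i" using co_eq[OF i] .
    finally show "(\<Sum>j\<in>\<tau>. RA A i j * co b j) = b i" .
  qed
qed

lemma dual_zero:
  assumes c0: "\<forall>j\<in>\<sigma>. c j = 0"
  shows "dual_vec d A c \<sigma> = (\<lambda>_. 0)"
  unfolding dual_vec_def
proof (rule the_equality)
  show "(\<forall>j\<in>\<sigma>. (\<Sum>i<d. 0 * RA A i j) = c j) \<and> (\<forall>i\<ge>d. (0::real) = 0)" using c0 by simp
next
  fix y assume y: "(\<forall>j\<in>\<sigma>. (\<Sum>i<d. y i * RA A i j) = c j) \<and> (\<forall>i\<ge>d. y i = 0)"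
  obtain l where l: "\<forall>i<d. (\<Sum>j\<in>\<sigma>. RA A i j * l j) = y i" using span by blast
  have "(\<Sum>i<d. y i * y i) = (\<Sum>i<d. y i * (\<Sum>j\<in>\<sigma>. RA A i j * l j))" using l by simp
  also have "\<dots> = (\<Sum>j\<in>\<sigma>. l j * (\<Sum>i<d. y i * RA A i j))"
    unfolding sum_distrib_left by (subst sum.swap) (simp add: mult_ac)
  also have "\<dots> = 0" using y c0 by simp
  finally have sq: "(\<Sum>i<d. y i * y i) = 0" .
  have "\<forall>i\<in>{..<d}. y i * y i = 0"
    using sum_nonneg_eq_0_iff[of "{..<d}" "\<lambda>i. y i * y i"] sq by simp
  then have "y i = 0" for i using y by (cases "i < d") auto
  then show "y = (\<lambda>_. 0)" by (intro ext)
qed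


lemma ydot_co:
  assumes t: "\<tau> \<subseteq> \<sigma>"
  defines "y \<equiv> (\<lambda>i. - (\<Sum>k\<in>\<sigma>-\<tau>. co (\<lambda>i'. if i' = i then 1 else 0) k))"
  shows "(\<Sum>i<d. y i * RA A i j) = - (\<Sum>k\<in>\<sigma>-\<tau>. co (col j) k)"
proof -
  have "(\<Sum>i<d. y i * RA A i j) = - (\<Sum>i<d. \<Sum>k\<in>\<sigma>-\<tau>. RA A i j * co (\<lambda>i'. if i' = i then 1 else 0) k)"
    unfolding y_def by (simp add: sum_negf sum_distrib_left mult.commute)
  also have "\<dots> = - (\<Sum>k\<in>\<sigma>-\<tau>. (\<Sum>i<d. RA A i j * co (\<lambda>i'. if i' = i then 1 else 0) k))"
    by (rule arg_cong[where f=uminus], rule sum.swap)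
  also have "\<dots> = - (\<Sum>k\<in>\<sigma>-\<tau>. co (\<lambda>i'. \<Sum>i<d. RA A i j * (if i' = i then 1 else 0)) k)"
    by (rule arg_cong[where f=uminus], rule sum.cong, simp, rule co_sum[symmetric]) auto
  also have "(\<lambda>i'. \<Sum>i<d. RA A i j * (if i' = i then 1 else 0)) = (\<lambda>i'. \<Sum>i<d. if i = i' then RA A i' j else 0)"
    by (intro ext sum.cong) auto
  also have "co \<dots> = co (col j)"
    by (rule co_cong) (simp add: col_def)
  finally show ?thesis .
qed

lemma Delta_eq:
  assumes c0: "\<forall>j\<in>\<sigma>. c j = 0" and cpos: "\<forall>j\<in>{..<n}-\<sigma>. 0 < c j"
  shows "Delta_c d n A c = {\<tau>. \<tau> \<subseteq> \<sigma>}"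
proof (intro equalityI subsetI)
  fix \<tau> assume "\<tau> \<in> Delta_c d n A c"
  then obtain y where tn: "\<tau> \<subseteq> {..<n}" and y1: "\<forall>j\<in>\<tau>. (\<Sum>i<d. y i * RA A i j) = c j"
    and y2: "\<forall>j\<in>{..<n}-\<tau>. (\<Sum>i<d. y i * RA A i j) < c j"
    unfolding Delta_c_def by blast
  show "\<tau> \<in> {\<tau>. \<tau> \<subseteq> \<sigma>}"
  proof (clarify, rule ccontr)
    fix j assume j: "j \<in> \<tau>" "j \<notin> \<sigma>"
    have jn: "j < n" using j tn by auto
    have ak: "(\<Sum>i<d. y i * RA A i k) \<le> 0" if k: "k \<in> \<sigma>" for k
    proof (cases "k \<in> \<tau>")
      case True then show ?thesis using y1 c0 k by simp
    next
      case False
      then have "k \<in> {..<n}-\<tau>" using k sub by auto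
      then have "(\<Sum>i<d. y i * RA A i k) < c k" using y2 by blast
      then show ?thesis using c0 k by simp
    qed
    have "(\<Sum>i<d. y i * RA A i j) = (\<Sum>i<d. y i * (\<Sum>k\<in>\<sigma>. RA A i k * co (col j) k))"
      by (rule sum.cong) (simp_all add: co_eq col_def)
    also have "\<dots> = (\<Sum>k\<in>\<sigma>. co (col j) k * (\<Sum>i<d. y i * RA A i k))"
      unfolding sum_distrib_left by (subst sum.swap) (simp add: mult_ac)
    also have "\<dots> \<le> 0"
      by (rule sum_nonpos) (simp add: ak co_col_nonneg[OF jn] mult_nonneg_nonpos)
    finally have "(\<Sum>i<d. y i * RA A i j) \<le> 0" .
    moreover have "0 < c j" using cpos j jn by blast
    ultimately show False using y1 j by simp
  qed
next
  fix \<tau> assume "\<tau> \<in> {\<tau>. \<tau> \<subseteq> \<sigma>}"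
  then have t: "\<tau> \<subseteq> \<sigma>" by blast
  define y where "y = (\<lambda>i. - (\<Sum>k\<in>\<sigma>-\<tau>. co (\<lambda>i'. if i' = i then 1 else (0::real)) k))"
  have yd: "(\<Sum>i<d. y i * RA A i j) = - (\<Sum>k\<in>\<sigma>-\<tau>. co (col j) k)" for j
    unfolding y_def by (rule ydot_co[OF t])
  have "(\<forall>j\<in>\<tau>. (\<Sum>i<d. y i * RA A i j) = c j) \<and> (\<forall>j\<in>{..<n} - \<tau>. (\<Sum>i<d. y i * RA A i j) < c j)"
  proof (intro conjI ballI)
    fix j assume j: "j \<in> \<tau>"
    have "(\<Sum>k\<in>\<sigma>-\<tau>. co (col j) k) = 0"
      by (rule sum.neutral) (use j t in \<open>auto simp: co_col_sigma\<close>)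
    then show "(\<Sum>i<d. y i * RA A i j) = c j" using yd c0 j t by auto
  next
    fix j assume j: "j \<in> {..<n} - \<tau>"
    show "(\<Sum>i<d. y i * RA A i j) < c j"
    proof (cases "j \<in> \<sigma>")
      case True
      have "(\<Sum>k\<in>\<sigma>-\<tau>. co (col j) k) = (\<Sum>k\<in>\<sigma>-\<tau>. if k = j then 1 else 0)"
        by (rule sum.cong) (use True in \<open>auto simp: co_col_sigma\<close>)
      also have "\<dots> = 1" using True j fin by simp
      finally show ?thesis using yd c0 True by simp
    next
      case False
      have "0 \<le> (\<Sum>k\<in>\<sigma>-\<tau>. co (col j) k)"
        by (rule sum_nonneg) (use j in \<open>auto intro: co_col_nonneg\<close>)
      moreover have "0 < c j" using cpos j False by blast
      ultimately show ?thesis using yd by simp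
    qed
  qed
  then show "\<tau> \<in> Delta_c d n A c" unfolding Delta_c_def using t sub by blast
qed

lemma triang: "triangulation d n A {\<tau>. \<tau> \<subseteq> \<sigma>}"
  unfolding triangulation_def
proof (intro conjI ballI allI impI)
  show "{\<tau>. \<tau> \<subseteq> \<sigma>} \<noteq> {}" by blast
next
  fix \<tau> assume "\<tau> \<in> {\<tau>. \<tau> \<subseteq> \<sigma>}" then show "\<tau> \<subseteq> {..<n}" using sub by auto
next
  fix \<tau> \<tau>' assume "\<tau> \<in> {\<tau>. \<tau> \<subseteq> \<sigma>}" "\<tau>' \<subseteq> \<tau>" then show "\<tau>' \<in> {\<tau>. \<tau> \<subseteq> \<sigma>}" by auto
next
  fix \<tau> assume "\<tau> \<in> {\<tau>. \<tau> \<subseteq> \<sigma>}"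
  then have t: "\<tau> \<subseteq> \<sigma>" by blast
  show "lin_indep_cols d (RA A) \<tau>" unfolding lin_indep_cols_def
  proof (intro allI impI ballI)
    fix m :: "nat \<Rightarrow> real" and j assume h: "\<forall>i<d. (\<Sum>j\<in>\<tau>. RA A i j * m j) = 0" and j: "j \<in> \<tau>"
    define m' where "m' j = (if j \<in> \<tau> then m j else 0)" for j
    have "\<forall>i<d. (\<Sum>j\<in>\<sigma>. RA A i j * m' j) = 0"
    proof (intro allI impI)
      fix i assume i: "i < d"
      have "(\<Sum>j\<in>\<sigma>. RA A i j * m' j) = (\<Sum>j\<in>\<tau>. RA A i j * m' j)"
        by (rule sum.mono_neutral_right) (use fin t in \<open>auto simp: m'_def\<close>)
      also have "\<dots> = (\<Sum>j\<in>\<tau>. RA A i j * m j)" by (rule sum.cong) (simp_all add: m'_def)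
      finally show "(\<Sum>j\<in>\<sigma>. RA A i j * m' j) = 0" using h i by simp
    qed
    from lin_indepD[OF li this] j t have "m' j = 0" by blast
    then show "m j = 0" using j by (simp add: m'_def)
  qed
next
  fix b
  show "rcone d (RA A) {..<n} b \<longleftrightarrow> (\<exists>\<tau>\<in>{\<tau>. \<tau> \<subseteq> \<sigma>}. rcone d (RA A) \<tau> b)"
  proof
    assume "rcone d (RA A) {..<n} b" then show "\<exists>\<tau>\<in>{\<tau>. \<tau> \<subseteq> \<sigma>}. rcone d (RA A) \<tau> b"
      using ceq by blast
  next
    assume "\<exists>\<tau>\<in>{\<tau>. \<tau> \<subseteq> \<sigma>}. rcone d (RA A) \<tau> b"
    then obtain \<tau> where t: "\<tau> \<subseteq> \<sigma>" "rcone d (RA A) \<tau> b" by blast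
    then have "rcone d (RA A) \<sigma> b" using rcone_sub_iff[OF t(1)] rcone_sub_iff[of \<sigma>] by simp
    then show "rcone d (RA A) {..<n} b" using ceq by blast
  qed
next
  fix \<tau> \<tau>' b assume "\<tau> \<in> {\<tau>. \<tau> \<subseteq> \<sigma>}" "\<tau>' \<in> {\<tau>. \<tau> \<subseteq> \<sigma>}"
  then have t: "\<tau> \<subseteq> \<sigma>" "\<tau>' \<subseteq> \<sigma>" "\<tau> \<inter> \<tau>' \<subseteq> \<sigma>" by auto
  show "(rcone d (RA A) \<tau> b \<and> rcone d (RA A) \<tau>' b) \<longleftrightarrow> rcone d (RA A) (\<tau> \<inter> \<tau>') b"
    unfolding rcone_sub_iff[OF t(1)] rcone_sub_iff[OF t(2)] rcone_sub_iff[OF t(3)] by blast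
qed

lemma coarsest: "coarsest_triangulation d n A {\<tau>. \<tau> \<subseteq> \<sigma>}"
  unfolding coarsest_triangulation_def
proof (intro conjI triang exI[of _ \<sigma>] allI)
  show "{\<tau>. maximal_face {\<tau>. \<tau> \<subseteq> \<sigma>} \<tau>} = {\<sigma>}"
    unfolding maximal_face_def by auto
  fix b show "rcone d (RA A) \<sigma> b \<longleftrightarrow> rcone d (RA A) {..<n} b" by (rule ceq)
qed

end

context sig begin

definition rb :: "(nat \<Rightarrow> int) \<Rightarrow> nat \<Rightarrow> real" where "rb b i = real_of_int (b i)"

definition h :: "nat \<Rightarrow> real" where "h j = (\<Sum>k\<in>\<sigma>. co (col j) k)"

lemma h_pos: assumes j: "j \<in> {..<n} - \<sigma>" shows "0 < h j"
proof -
  have jn: "j < n" using j by auto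
  have nn: "0 \<le> h j" unfolding h_def by (rule sum_nonneg) (simp add: co_col_nonneg jn)
  show ?thesis
  proof (rule ccontr)
    assume "\<not> 0 < h j"
    then have "h j = 0" using nn by simp
    then have z: "\<forall>k\<in>\<sigma>. co (col j) k = 0"
      unfolding h_def using sum_nonneg_eq_0_iff[OF fin, of "\<lambda>k. co (col j) k"] co_col_nonneg[OF jn] by simp
    define x where "x j' = (if j' = j then 1 else (0::real))" for j'
    have "\<forall>i<d. (\<Sum>j'<n. RA A i j' * x j') = 0"
    proof (intro allI impI)
      fix i assume i: "i < d"
      have "(\<Sum>j'<n. RA A i j' * x j') = RA A i j" using jn by (simp add: x_def if_distrib cong: if_cong)
      also have "\<dots> = (\<Sum>k\<in>\<sigma>. RA A i k * co (col j) k)" using co_eq[OF i, of "col j"] by (simp add: col_def)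
      also have "\<dots> = 0" using z by simp
      finally show "(\<Sum>j'<n. RA A i j' * x j') = 0" .
    qed
    moreover have "\<forall>j'<n. 0 \<le> x j'" by (simp add: x_def)
    ultimately have "\<forall>j'<n. x j' = 0" using std unfolding standing_assms_def by blast
    then have "x j = 0" using jn by blast
    then show False by (simp add: x_def)
  qed
qed

lemma feas_co:
  assumes ax: "\<forall>i<d. (\<Sum>j<n. A i j * x j) = b i" and k: "k \<in> \<sigma>"
  shows "co (rb b) k = real_of_int (x k) + (\<Sum>j\<in>{..<n}-\<sigma>. real_of_int (x j) * co (col j) k)"
proof -
  have "co (rb b) = co (\<lambda>i. \<Sum>j<n. RA A i j * real_of_int (x j))"
  proof (rule co_cong)
    fix i assume "i < d"
    then have "b i = (\<Sum>j<n. A i j * x j)" using ax by simp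
    then show "rb b i = (\<Sum>j<n. RA A i j * real_of_int (x j))" by (simp add: rb_def RA_def)
  qed
  then show ?thesis using co_Ax[OF k] by simp
qed

lemma feas_le:
  assumes nn: "\<forall>j\<in>{..<n}-\<sigma>. 0 \<le> x j" and ax: "\<forall>i<d. (\<Sum>j<n. A i j * x j) = b i" and k: "k \<in> \<sigma>"
  shows "x k \<le> \<lfloor>co (rb b) k\<rfloor>"
proof -
  have "0 \<le> (\<Sum>j\<in>{..<n}-\<sigma>. real_of_int (x j) * co (col j) k)"
    by (rule sum_nonneg) (use nn in \<open>auto intro!: mult_nonneg_nonneg co_col_nonneg\<close>)
  then have "real_of_int (x k) \<le> co (rb b) k" using feas_co[OF ax k] by simp
  then show ?thesis by (simp add: le_floor_iff)
qed

lemma feas_hsum: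
  assumes ax: "\<forall>i<d. (\<Sum>j<n. A i j * x j) = b i"
  shows "(\<Sum>j\<in>{..<n}-\<sigma>. real_of_int (x j) * h j) = (\<Sum>k\<in>\<sigma>. co (rb b) k - real_of_int (x k))"
proof -
  have "(\<Sum>j\<in>{..<n}-\<sigma>. real_of_int (x j) * h j) = (\<Sum>k\<in>\<sigma>. \<Sum>j\<in>{..<n}-\<sigma>. real_of_int (x j) * co (col j) k)"
    unfolding h_def sum_distrib_left by (rule sum.swap)
  also have "\<dots> = (\<Sum>k\<in>\<sigma>. co (rb b) k - real_of_int (x k))"
    by (rule sum.cong) (simp_all add: feas_co[OF ax])
  finally show ?thesis .
qed


definition hmin :: real where "hmin = Min (h ` ({..<n} - \<sigma>))"
definition Bb :: nat where "Bb = nat \<lceil>real (card \<sigma>) / hmin\<rceil>"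
definition Rb :: nat where "Rb = Bb + 1"
definition Sb :: nat where "Sb = Rb ^ n"
definition Kb :: int where "Kb = (\<Sum>i<d. \<Sum>k\<in>\<sigma>. \<bar>A i k\<bar>)"
definition Qset :: "(nat \<Rightarrow> int) set" where "Qset = PiE {..<d} (\<lambda>_. {-Kb..Kb})"
definition uq :: "(nat \<Rightarrow> int) \<Rightarrow> nat \<Rightarrow> nat" where
  "uq q = (SOME u. \<forall>i<d. (\<Sum>j<n. A i j * int (u j)) = q i)"
definition Mq :: "(nat \<Rightarrow> int) \<Rightarrow> nat" where "Mq q = (\<Sum>j<n. (1 + Rb ^ j) * uq q j)"
definition Mb :: nat where "Mb = Max (Mq ` Qset) + 1"
definition cc :: "nat \<Rightarrow> int" where
  "cc j = (if j < n \<and> j \<notin> \<sigma> then int Sb * \<lceil>real Mb * h j\<rceil> + int (Rb ^ j) else 0)"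
definition costx :: "(nat \<Rightarrow> int) \<Rightarrow> int" where "costx x = (\<Sum>j<n. cc j * x j)"
definition Fb :: "(nat \<Rightarrow> int) \<Rightarrow> real" where "Fb b = (\<Sum>k\<in>\<sigma>. co (rb b) k - \<lfloor>co (rb b) k\<rfloor>)"

lemma Sb_pos: "1 \<le> Sb" unfolding Sb_def Rb_def by simp

lemma cost_alt: "costx x = (\<Sum>j\<in>{..<n}-\<sigma>. cc j * x j)"
  unfolding costx_def by (rule sum.mono_neutral_right) (auto simp: cc_def)

lemma cc_lower: "j \<in> {..<n}-\<sigma> \<Longrightarrow> real Sb * real Mb * h j \<le> real_of_int (cc j)"
proof -
  assume j: "j \<in> {..<n}-\<sigma>"
  have "real Mb * h j \<le> real_of_int \<lceil>real Mb * h j\<rceil>" by (rule le_of_int_ceiling)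
  then have "real Sb * (real Mb * h j) \<le> real Sb * real_of_int \<lceil>real Mb * h j\<rceil>"
    by (rule mult_left_mono) simp
  moreover have "0 \<le> real Rb ^ j" by simp
  moreover have "real_of_int (cc j) = real Sb * real_of_int \<lceil>real Mb * h j\<rceil> + real Rb ^ j"
    using j by (simp add: cc_def)
  ultimately show ?thesis unfolding mult.assoc by linarith
qed

lemma cc_upper: "j \<in> {..<n}-\<sigma> \<Longrightarrow> real_of_int (cc j) \<le> real Sb * real Mb * h j + real Sb * (1 + real Rb ^ j)"
proof -
  assume j: "j \<in> {..<n}-\<sigma>"
  have "real_of_int \<lceil>real Mb * h j\<rceil> \<le> real Mb * h j + 1" by linarith
  then have "real Sb * real_of_int \<lceil>real Mb * h j\<rceil> \<le> real Sb * (real Mb * h j + 1)"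
    by (rule mult_left_mono) simp
  moreover have "1 * real Rb ^ j \<le> real Sb * real Rb ^ j" using Sb_pos by (intro mult_right_mono) auto
  ultimately show ?thesis using j by (simp add: cc_def algebra_simps)
qed

lemma cost_lower:
  assumes nn: "\<forall>j\<in>{..<n}-\<sigma>. 0 \<le> x j"
  shows "real Sb * real Mb * (\<Sum>j\<in>{..<n}-\<sigma>. real_of_int (x j) * h j) \<le> real_of_int (costx x)"
proof -
  have "real Sb * real Mb * (\<Sum>j\<in>{..<n}-\<sigma>. real_of_int (x j) * h j)
      = (\<Sum>j\<in>{..<n}-\<sigma>. real_of_int (x j) * (real Sb * real Mb * h j))"
    by (simp add: sum_distrib_left mult_ac)
  also have "\<dots> \<le> (\<Sum>j\<in>{..<n}-\<sigma>. real_of_int (x j) * real_of_int (cc j))"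
    by (rule sum_mono) (use nn cc_lower in \<open>auto intro: mult_left_mono\<close>)
  also have "\<dots> = real_of_int (costx x)" by (simp add: cost_alt mult.commute)
  finally show ?thesis .
qed

lemma cost_upper:
  shows "real_of_int (costx (\<lambda>j. int (u j))) \<le> real Sb * real Mb * (\<Sum>j\<in>{..<n}-\<sigma>. real (u j) * h j)
           + real Sb * (\<Sum>j<n. (1 + real Rb ^ j) * real (u j))"
proof -
  have "real_of_int (costx (\<lambda>j. int (u j))) = (\<Sum>j\<in>{..<n}-\<sigma>. real (u j) * real_of_int (cc j))"
    by (simp add: cost_alt mult.commute)
  also have "\<dots> \<le> (\<Sum>j\<in>{..<n}-\<sigma>. real (u j) * (real Sb * real Mb * h j + real Sb * (1 + real Rb ^ j)))"
    by (rule sum_mono) (use cc_upper in \<open>auto intro: mult_left_mono\<close>)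
  also have "\<dots> = real Sb * real Mb * (\<Sum>j\<in>{..<n}-\<sigma>. real (u j) * h j)
           + real Sb * (\<Sum>j\<in>{..<n}-\<sigma>. (1 + real Rb ^ j) * real (u j))"
    by (simp add: sum_distrib_left sum.distrib algebra_simps)
  also have "(\<Sum>j\<in>{..<n}-\<sigma>. (1 + real Rb ^ j) * real (u j)) \<le> (\<Sum>j<n. (1 + real Rb ^ j) * real (u j))"
    by (rule sum_mono2) auto
  finally show ?thesis using Sb_pos by simp
qed


lemma x0:
  assumes bnn: "\<forall>k\<in>\<sigma>. 0 \<le> co (rb b) k"
  shows "\<exists>u::nat\<Rightarrow>nat. (\<forall>j\<ge>n. u j = 0) \<and> (\<forall>i<d. (\<Sum>j<n. A i j * int (u j)) = b i) \<and>
           real_of_int (costx (\<lambda>j. int (u j))) < real Sb * real Mb * (Fb b + 1)"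
proof -
  define fl where "fl k = \<lfloor>co (rb b) k\<rfloor>" for k
  define fr where "fr k = co (rb b) k - real_of_int (fl k)" for k
  have fr01: "0 \<le> fr k" "fr k < 1" for k unfolding fr_def fl_def by linarith+
  have flnn: "k \<in> \<sigma> \<Longrightarrow> 0 \<le> fl k" for k using bnn unfolding fl_def by simp
  define q where "q i = (if i < d then b i - (\<Sum>k\<in>\<sigma>. fl k * A i k) else undefined)" for i
  have hq: "real_of_int (q i) = (\<Sum>k\<in>\<sigma>. RA A i k * fr k)" if i: "i < d" for i
  proof -
    have "real_of_int (b i) = (\<Sum>k\<in>\<sigma>. RA A i k * co (rb b) k)" using co_eq[OF i, of "rb b"] by (simp add: rb_def)
    then show ?thesis using i
      by (simp add: q_def fr_def right_diff_distrib sum_subtractf RA_def mult.commute)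
  qed
  have qQ: "q \<in> Qset" unfolding Qset_def
  proof (rule PiE_I)
    fix i assume i: "i \<in> {..<d}"
    have "\<bar>real_of_int (q i)\<bar> \<le> (\<Sum>k\<in>\<sigma>. \<bar>RA A i k * fr k\<bar>)" using hq i by (simp add: sum_abs)
    also have "\<dots> \<le> (\<Sum>k\<in>\<sigma>. \<bar>RA A i k\<bar>)"
    proof (rule sum_mono)
      fix k have "\<bar>RA A i k\<bar> * \<bar>fr k\<bar> \<le> \<bar>RA A i k\<bar> * 1" using fr01[of k] by (intro mult_left_mono) auto
      then show "\<bar>RA A i k * fr k\<bar> \<le> \<bar>RA A i k\<bar>" by (simp add: abs_mult)
    qed
    also have "\<dots> = real_of_int (\<Sum>k\<in>\<sigma>. \<bar>A i k\<bar>)" by (simp add: RA_def)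
    finally have "\<bar>q i\<bar> \<le> (\<Sum>k\<in>\<sigma>. \<bar>A i k\<bar>)" by linarith
    also have "\<dots> \<le> Kb" unfolding Kb_def
      by (rule member_le_sum[of i "{..<d}" "\<lambda>i. \<Sum>k\<in>\<sigma>. \<bar>A i k\<bar>"]) (use i in \<open>auto intro: sum_nonneg\<close>)
    finally show "q i \<in> {-Kb..Kb}" by auto
  next
    fix i assume "i \<notin> {..<d}" then show "q i = undefined" by (simp add: q_def)
  qed
  have rq: "rcone d (RA A) \<sigma> (\<lambda>i. real_of_int (q i))"
    unfolding rcone_def using fr01 hq by (intro exI[of _ fr]) auto
  then have "inNA d n A q" using nrm ceq unfolding normal_mat_def by blast
  then have "\<exists>u. \<forall>i<d. (\<Sum>j<n. A i j * int (u j)) = q i" unfolding inNA_def .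
  then have uqs: "\<forall>i<d. (\<Sum>j<n. A i j * int (uq q j)) = q i" unfolding uq_def by (rule someI_ex)
  have coq: "co (rb q) k = fr k" if k: "k \<in> \<sigma>" for k
    by (rule co_uniq[symmetric]) (use hq k in \<open>auto simp: rb_def\<close>)
  define u where "u j = (if j < n then uq q j + (if j \<in> \<sigma> then nat (fl j) else 0) else 0)" for j
  have u1: "\<forall>j\<ge>n. u j = 0" by (simp add: u_def)
  have u2: "\<forall>i<d. (\<Sum>j<n. A i j * int (u j)) = b i"
  proof (intro allI impI)
    fix i assume i: "i < d"
    have "(\<Sum>j<n. A i j * int (u j)) = (\<Sum>j<n. A i j * int (uq q j)) + (\<Sum>j<n. A i j * (if j \<in> \<sigma> then fl j else 0))"
      unfolding sum.distrib[symmetric]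
      by (rule sum.cong) (auto simp: u_def flnn algebra_simps)
    also have "(\<Sum>j<n. A i j * (if j \<in> \<sigma> then fl j else 0)) = (\<Sum>j\<in>\<sigma>. fl j * A i j)"
      by (rule sum.mono_neutral_cong_right) (use sub in auto)
    moreover have "q i = b i - (\<Sum>k\<in>\<sigma>. fl k * A i k)" using i by (simp add: q_def)
    ultimately show "(\<Sum>j<n. A i j * int (u j)) = b i" using uqs i by simp
  qed
  have cu: "costx (\<lambda>j. int (u j)) = costx (\<lambda>j. int (uq q j))"
    unfolding cost_alt by (rule sum.cong) (auto simp: u_def)
  have hs: "(\<Sum>j\<in>{..<n}-\<sigma>. real (uq q j) * h j) \<le> Fb b"
  proof -
    have "(\<Sum>j\<in>{..<n}-\<sigma>. real (uq q j) * h j) = (\<Sum>k\<in>\<sigma>. co (rb q) k - real (uq q k))"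
      using feas_hsum[of "\<lambda>j. int (uq q j)" q] uqs by simp
    also have "\<dots> \<le> (\<Sum>k\<in>\<sigma>. fr k)" by (rule sum_mono) (simp add: coq)
    also have "\<dots> = Fb b" unfolding Fb_def fr_def fl_def by simp
    finally show ?thesis .
  qed
  have mq: "real (Mq q) \<le> real Mb - 1"
  proof -
    have "finite Qset" unfolding Qset_def by (rule finite_PiE) auto
    then have "Mq q \<le> Max (Mq ` Qset)" using qQ by (intro Max_ge) auto
    then show ?thesis unfolding Mb_def by simp
  qed
  have mq': "(\<Sum>j<n. (1 + real Rb ^ j) * real (uq q j)) = real (Mq q)"
    unfolding Mq_def by (simp add: algebra_simps)
  have "real_of_int (costx (\<lambda>j. int (u j))) \<le> real Sb * real Mb * (\<Sum>j\<in>{..<n}-\<sigma>. real (uq q j) * h j)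
           + real Sb * (\<Sum>j<n. (1 + real Rb ^ j) * real (uq q j))"
    unfolding cu by (rule cost_upper)
  also have "\<dots> \<le> real Sb * real Mb * Fb b + real Sb * (real Mb - 1)"
    unfolding mq' using hs mq Sb_pos by (intro add_mono mult_left_mono) auto
  also have "\<dots> < real Sb * real Mb * (Fb b + 1)" using Sb_pos by (simp add: algebra_simps)
  finally show ?thesis using u1 u2 by blast
qed


lemma strict:
  assumes nn: "\<forall>j\<in>{..<n}-\<sigma>. 0 \<le> x j" and ax: "\<forall>i<d. (\<Sum>j<n. A i j * x j) = b i"
    and k: "k \<in> \<sigma>" "x k < \<lfloor>co (rb b) k\<rfloor>"
  shows "real Sb * real Mb * (Fb b + 1) \<le> real_of_int (costx x)"
proof -
  have le: "\<And>k. k \<in> \<sigma> \<Longrightarrow> x k \<le> \<lfloor>co (rb b) k\<rfloor>" using feas_le[OF nn ax] by blast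
  have "1 \<le> \<lfloor>co (rb b) k\<rfloor> - x k" using k by simp
  also have "\<dots> \<le> (\<Sum>k\<in>\<sigma>. \<lfloor>co (rb b) k\<rfloor> - x k)"
    by (rule member_le_sum) (use k fin le in auto)
  finally have one: "1 \<le> (\<Sum>k\<in>\<sigma>. real_of_int (\<lfloor>co (rb b) k\<rfloor> - x k))"
    by (metis of_int_le_iff of_int_1 of_int_sum)
  have "(\<Sum>j\<in>{..<n}-\<sigma>. real_of_int (x j) * h j) = (\<Sum>k\<in>\<sigma>. co (rb b) k - real_of_int (x k))"
    by (rule feas_hsum[OF ax])
  also have "\<dots> = Fb b + (\<Sum>k\<in>\<sigma>. real_of_int (\<lfloor>co (rb b) k\<rfloor> - x k))"
    unfolding Fb_def sum.distrib[symmetric] by (rule sum.cong) auto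
  finally have "Fb b + 1 \<le> (\<Sum>j\<in>{..<n}-\<sigma>. real_of_int (x j) * h j)" using one by simp
  then have "real Sb * real Mb * (Fb b + 1) \<le> real Sb * real Mb * (\<Sum>j\<in>{..<n}-\<sigma>. real_of_int (x j) * h j)"
    by (rule mult_left_mono) simp
  also have "\<dots> \<le> real_of_int (costx x)" by (rule cost_lower[OF nn])
  finally show ?thesis .
qed

lemma bound:
  assumes nn: "\<forall>j\<in>{..<n}-\<sigma>. 0 \<le> x j" and ax: "\<forall>i<d. (\<Sum>j<n. A i j * x j) = b i"
    and eq: "\<forall>k\<in>\<sigma>. x k = \<lfloor>co (rb b) k\<rfloor>" and j: "j \<in> {..<n}-\<sigma>"
  shows "x j < int Rb"
proof -
  have "(\<Sum>j\<in>{..<n}-\<sigma>. real_of_int (x j) * h j) = (\<Sum>k\<in>\<sigma>. co (rb b) k - real_of_int (x k))"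
    by (rule feas_hsum[OF ax])
  also have "\<dots> \<le> (\<Sum>k\<in>\<sigma>. 1)" by (rule sum_mono) (use eq in \<open>auto, linarith\<close>)
  also have "\<dots> = real (card \<sigma>)" by simp
  finally have s: "(\<Sum>j\<in>{..<n}-\<sigma>. real_of_int (x j) * h j) \<le> real (card \<sigma>)" .
  have "real_of_int (x j) * h j \<le> (\<Sum>j\<in>{..<n}-\<sigma>. real_of_int (x j) * h j)"
  proof (rule member_le_sum)
    fix i assume i: "i \<in> {..<n}-\<sigma> - {j}"
    then have "0 \<le> real_of_int (x i)" "0 < h i" using nn h_pos by auto
    then show "0 \<le> real_of_int (x i) * h i" by simp
  qed (use j in auto)
  with s have xh: "real_of_int (x j) * h j \<le> real (card \<sigma>)" by simp
  have finD: "finite ({..<n}-\<sigma>)" by simp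
  have hm: "hmin \<le> h j" unfolding hmin_def using j finD by (intro Min_le) auto
  have "hmin \<in> h ` ({..<n}-\<sigma>)" unfolding hmin_def using j finD by (intro Min_in) auto
  then have hmp: "0 < hmin" using h_pos by auto
  have xj0: "0 \<le> real_of_int (x j)" using nn j by simp
  have "real_of_int (x j) * hmin \<le> real_of_int (x j) * h j" by (rule mult_left_mono[OF hm xj0])
  with xh have "real_of_int (x j) * hmin \<le> real (card \<sigma>)" by simp
  then have "real_of_int (x j) \<le> real (card \<sigma>) / hmin" using hmp by (simp add: field_simps)
  also have "\<dots> \<le> real_of_int \<lceil>real (card \<sigma>) / hmin\<rceil>" by (rule le_of_int_ceiling)
  finally have "x j \<le> \<lceil>real (card \<sigma>) / hmin\<rceil>" by linarith
  moreover have "0 \<le> real (card \<sigma>) / hmin" using hmp by simp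
  then have "0 \<le> \<lceil>real (card \<sigma>) / hmin\<rceil>" by linarith
  ultimately show ?thesis unfolding Rb_def Bb_def by simp
qed

lemma uniq:
  assumes nn: "\<forall>j\<in>{..<n}-\<sigma>. 0 \<le> x j" and ax: "\<forall>i<d. (\<Sum>j<n. A i j * x j) = b i"
    and eq: "\<forall>k\<in>\<sigma>. x k = \<lfloor>co (rb b) k\<rfloor>" and z: "\<forall>j\<ge>n. x j = 0"
  assumes nn': "\<forall>j\<in>{..<n}-\<sigma>. 0 \<le> x' j" and ax': "\<forall>i<d. (\<Sum>j<n. A i j * x' j) = b i"
    and eq': "\<forall>k\<in>\<sigma>. x' k = \<lfloor>co (rb b) k\<rfloor>" and z': "\<forall>j\<ge>n. x' j = 0"
    and c: "costx x = costx x'"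
  shows "x = x'"
proof -
  have split: "costx y = int Sb * (\<Sum>j\<in>{..<n}-\<sigma>. \<lceil>real Mb * h j\<rceil> * y j)
      + (\<Sum>j<n. int Rb ^ j * (if j \<in> \<sigma> then 0 else y j))" for y
  proof -
    have "costx y = (\<Sum>j\<in>{..<n}-\<sigma>. int Sb * (\<lceil>real Mb * h j\<rceil> * y j) + int Rb ^ j * y j)"
      unfolding cost_alt by (rule sum.cong) (auto simp: cc_def algebra_simps)
    also have "\<dots> = int Sb * (\<Sum>j\<in>{..<n}-\<sigma>. \<lceil>real Mb * h j\<rceil> * y j) + (\<Sum>j\<in>{..<n}-\<sigma>. int Rb ^ j * y j)"
      by (simp add: sum.distrib sum_distrib_left)
    also have "(\<Sum>j\<in>{..<n}-\<sigma>. int Rb ^ j * y j) = (\<Sum>j<n. int Rb ^ j * (if j \<in> \<sigma> then 0 else y j))"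
      by (rule sum.mono_neutral_cong_left) auto
    finally show ?thesis .
  qed
  define zz where "zz y j = (if j \<in> \<sigma> then 0 else y j)" for y :: "nat \<Rightarrow> int" and j
  have R1: "1 \<le> int Rb" unfolding Rb_def by simp
  have dz: "\<forall>j<n. 0 \<le> zz x j \<and> zz x j < int Rb"
    using nn bound[OF nn ax eq] R1 by (auto simp: zz_def)
  have dz': "\<forall>j<n. 0 \<le> zz x' j \<and> zz x' j < int Rb"
    using nn' bound[OF nn' ax' eq'] R1 by (auto simp: zz_def)
  have b1: "0 \<le> (\<Sum>j<n. int Rb ^ j * zz x j) \<and> (\<Sum>j<n. int Rb ^ j * zz x j) < int Rb ^ n"
    by (rule digits_bound[OF R1 dz])
  have b2: "0 \<le> (\<Sum>j<n. int Rb ^ j * zz x' j) \<and> (\<Sum>j<n. int Rb ^ j * zz x' j) < int Rb ^ n"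
    by (rule digits_bound[OF R1 dz'])
  have Sb': "int Sb = int Rb ^ n" unfolding Sb_def by simp
  have m1: "costx x mod int Sb = (\<Sum>j<n. int Rb ^ j * zz x j)"
    unfolding split[of x] zz_def[symmetric] using b1 Sb' by simp
  have m2: "costx x' mod int Sb = (\<Sum>j<n. int Rb ^ j * zz x' j)"
    unfolding split[of x'] zz_def[symmetric] using b2 Sb' by simp
  have "\<forall>j<n. zz x j = zz x' j"
    by (rule digits_inj[OF R1 dz dz']) (use m1 m2 c in simp)
  show "x = x'"
  proof
    fix j show "x j = x' j"
    proof (cases "j < n")
      case True
      show ?thesis
      proof (cases "j \<in> \<sigma>")
        case True then show ?thesis using eq eq' by simp
      next
        case False
        have "zz x j = zz x' j" using \<open>\<forall>j<n. zz x j = zz x' j\<close> \<open>j < n\<close> by blast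
        then show ?thesis using False by (simp add: zz_def)
      qed
    next
      case False then show ?thesis using z z' by simp
    qed
  qed
qed


lemma cc_nonneg: "0 \<le> cc j"
proof (cases "j \<in> {..<n}-\<sigma>")
  case True
  have "0 \<le> real Sb * real Mb * h j" using h_pos[OF True] by simp
  also have "\<dots> \<le> real_of_int (cc j)" by (rule cc_lower[OF True])
  finally show ?thesis by simp
next
  case False then show ?thesis by (auto simp: cc_def)
qed

lemma cc_pos: "j \<in> {..<n}-\<sigma> \<Longrightarrow> 0 < real_of_int (cc j)"
proof -
  assume j: "j \<in> {..<n}-\<sigma>"
  have "0 < real Sb * real Mb * h j" using h_pos[OF j] Sb_pos by (simp add: Mb_def)
  also have "\<dots> \<le> real_of_int (cc j)" by (rule cc_lower[OF j])
  finally show ?thesis .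
qed

lemma cc_sigma: "j \<in> \<sigma> \<Longrightarrow> real_of_int (cc j) = 0" by (simp add: cc_def)

lemma Delta_cc: "Delta_c d n A (\<lambda>j. real_of_int (cc j)) = {\<tau>. \<tau> \<subseteq> \<sigma>}"
proof (rule Delta_eq)
  show "\<forall>j\<in>\<sigma>. real_of_int (cc j) = 0" by (simp add: cc_sigma)
  show "\<forall>j\<in>{..<n} - \<sigma>. 0 < real_of_int (cc j)" using cc_pos by blast
qed

lemma costx_nonneg: "(\<forall>j. 0 \<le> x j) \<Longrightarrow> 0 \<le> costx x"
  unfolding costx_def by (intro sum_nonneg mult_nonneg_nonneg cc_nonneg) auto

lemma ip_cost: "(\<Sum>j<n. real_of_int (cc j) * real (u j)) = real_of_int (costx (\<lambda>j. int (u j)))"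
  by (simp add: costx_def)

lemma red_cost: "reduced_cost d A (\<lambda>j. real_of_int (cc j)) \<sigma> j = real_of_int (cc j)"
  unfolding reduced_cost_def by (subst dual_zero) (simp_all add: cc_sigma)

lemma main_b:
  assumes b: "inNA d n A b"
  shows "(\<exists>!u. ip_optimal d n A (\<lambda>j. real_of_int (cc j)) b u) \<and> gr_solves d n A (\<lambda>j. real_of_int (cc j)) \<sigma> b"
proof -
  obtain u0 where u0: "\<forall>i<d. (\<Sum>j<n. A i j * int (u0 j)) = b i" using b unfolding inNA_def by blast
  have "rcone d (RA A) {..<n} (rb b)" unfolding rcone_def
  proof (rule exI[of _ "\<lambda>j. real (u0 j)"], intro conjI allI impI ballI)
    fix i assume i: "i < d"
    have "real_of_int (\<Sum>j<n. A i j * int (u0 j)) = real_of_int (b i)" using u0 i by simp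
    then show "(\<Sum>j<n. RA A i j * real (u0 j)) = rb b i" by (simp add: rb_def RA_def)
  qed simp
  then have "rcone d (RA A) \<sigma> (rb b)" using ceq by blast
  then have bnn: "\<forall>k\<in>\<sigma>. 0 \<le> co (rb b) k" using rcone_sigma_co by blast
  obtain w where w1: "\<forall>j\<ge>n. w j = 0" and w2: "\<forall>i<d. (\<Sum>j<n. A i j * int (w j)) = b i"
    and w3: "real_of_int (costx (\<lambda>j. int (w j))) < real Sb * real Mb * (Fb b + 1)"
    using x0[OF bnn] by blast
  have wf: "ip_feasible d n A b w" unfolding ip_feasible_def using w1 w2 by blast
  define m where "m v = nat (costx (\<lambda>j. int (v j)))" for v :: "nat \<Rightarrow> nat"
  obtain us where us: "ip_feasible d n A b us" and usmin: "\<And>v. ip_feasible d n A b v \<Longrightarrow> m us \<le> m v"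
    using ex_has_least_nat[of "ip_feasible d n A b" w m] wf by blast
  have cnn: "0 \<le> costx (\<lambda>j. int (v j))" for v :: "nat \<Rightarrow> nat" by (rule costx_nonneg) simp
  have usle: "costx (\<lambda>j. int (us j)) \<le> costx (\<lambda>j. int (v j))" if "ip_feasible d n A b v" for v
    using usmin[OF that] cnn[of us] cnn[of v] unfolding m_def by simp
  have opt: "ip_optimal d n A (\<lambda>j. real_of_int (cc j)) b us"
    unfolding ip_optimal_def ip_cost using us usle by simp
  have floor_eq: "\<forall>k\<in>\<sigma>. int (v k) = \<lfloor>co (rb b) k\<rfloor>"
    if vf: "ip_feasible d n A b v" and vle: "costx (\<lambda>j. int (v j)) \<le> costx (\<lambda>j. int (w j))" for v
  proof
    fix k assume k: "k \<in> \<sigma>"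
    have nn: "\<forall>j\<in>{..<n}-\<sigma>. 0 \<le> int (v j)" by simp
    have ax: "\<forall>i<d. (\<Sum>j<n. A i j * int (v j)) = b i" using vf unfolding ip_feasible_def by blast
    have le: "int (v k) \<le> \<lfloor>co (rb b) k\<rfloor>" using feas_le[OF nn ax k] .
    show "int (v k) = \<lfloor>co (rb b) k\<rfloor>"
    proof (rule ccontr)
      assume "int (v k) \<noteq> \<lfloor>co (rb b) k\<rfloor>"
      then have "int (v k) < \<lfloor>co (rb b) k\<rfloor>" using le by simp
      from strict[OF nn ax k this] w3 vle show False by linarith
    qed
  qed
  have usw: "costx (\<lambda>j. int (us j)) \<le> costx (\<lambda>j. int (w j))" using usle[OF wf] .
  have uniq_u: "v = us" if vo: "ip_optimal d n A (\<lambda>j. real_of_int (cc j)) b v" for v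
  proof -
    have vf: "ip_feasible d n A b v" using vo unfolding ip_optimal_def by blast
    have v1: "costx (\<lambda>j. int (v j)) \<le> costx (\<lambda>j. int (us j))"
      using vo us unfolding ip_optimal_def ip_cost by simp
    have v2: "costx (\<lambda>j. int (us j)) \<le> costx (\<lambda>j. int (v j))" using usle[OF vf] .
    have "(\<lambda>j. int (v j)) = (\<lambda>j. int (us j))"
    proof (rule uniq)
      show "\<forall>j\<in>{..<n}-\<sigma>. 0 \<le> int (v j)" "\<forall>j\<in>{..<n}-\<sigma>. 0 \<le> int (us j)" by simp_all
      show "\<forall>i<d. (\<Sum>j<n. A i j * int (v j)) = b i" using vf unfolding ip_feasible_def by blast
      show "\<forall>i<d. (\<Sum>j<n. A i j * int (us j)) = b i" using us unfolding ip_feasible_def by blast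
      show "\<forall>j\<ge>n. int (v j) = 0" using vf unfolding ip_feasible_def by simp
      show "\<forall>j\<ge>n. int (us j) = 0" using us unfolding ip_feasible_def by simp
      show "\<forall>k\<in>\<sigma>. int (v k) = \<lfloor>co (rb b) k\<rfloor>" using floor_eq[OF vf] v1 usw by simp
      show "\<forall>k\<in>\<sigma>. int (us k) = \<lfloor>co (rb b) k\<rfloor>" using floor_eq[OF us usw] .
      show "costx (\<lambda>j. int (v j)) = costx (\<lambda>j. int (us j))" using v1 v2 by simp
    qed
    then show "v = us" by (intro ext) (metis of_nat_eq_iff)
  qed
  have gr: "gr_optimal d n A (\<lambda>j. real_of_int (cc j)) \<sigma> b (\<lambda>j. int (us j))"
    unfolding gr_optimal_def
  proof (intro conjI allI impI)
    show "gr_feasible d n A \<sigma> b (\<lambda>j. int (us j))"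
      using us unfolding gr_feasible_def ip_feasible_def by simp
  next
    fix x' assume xf: "gr_feasible d n A \<sigma> b x'"
    have nn: "\<forall>j\<in>{..<n}-\<sigma>. 0 \<le> x' j" and ax: "\<forall>i<d. (\<Sum>j<n. A i j * x' j) = b i"
      and z: "\<forall>j\<ge>n. x' j = 0" using xf unfolding gr_feasible_def by blast+
    have obj: "(\<Sum>j\<in>{..<n} - \<sigma>. reduced_cost d A (\<lambda>j. real_of_int (cc j)) \<sigma> j * real_of_int (y j))
        = real_of_int (costx y)" for y
      unfolding red_cost cost_alt by simp
    have "costx (\<lambda>j. int (us j)) \<le> costx x'"
    proof (cases "\<exists>k\<in>\<sigma>. x' k < \<lfloor>co (rb b) k\<rfloor>")
      case True
      then obtain k where k: "k \<in> \<sigma>" "x' k < \<lfloor>co (rb b) k\<rfloor>" by blast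
      from strict[OF nn ax k] w3 usw show ?thesis by linarith
    next
      case False
      then have eqk: "\<forall>k\<in>\<sigma>. x' k = \<lfloor>co (rb b) k\<rfloor>" using feas_le[OF nn ax] by force
      have x'nn: "0 \<le> x' j" for j
      proof (cases "j < n")
        case True
        show ?thesis
        proof (cases "j \<in> \<sigma>")
          case True then show ?thesis using eqk bnn by simp
        next
          case False then show ?thesis using nn \<open>j < n\<close> by simp
        qed
      next
        case False then show ?thesis using z by simp
      qed
      define v where "v j = nat (x' j)" for j
      have xv: "(\<lambda>j. int (v j)) = x'" using x'nn by (simp add: v_def)
      have "ip_feasible d n A b v" unfolding ip_feasible_def
        using ax z x'nn by (simp add: v_def)
      from usle[OF this] show ?thesis unfolding xv .
    qed
    then show "(\<Sum>j\<in>{..<n} - \<sigma>. reduced_cost d A (\<lambda>j. real_of_int (cc j)) \<sigma> j * real_of_int (int (us j)))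
        \<le> (\<Sum>j\<in>{..<n} - \<sigma>. reduced_cost d A (\<lambda>j. real_of_int (cc j)) \<sigma> j * real_of_int (x' j))"
      unfolding obj by simp
  qed
  have "gr_solves d n A (\<lambda>j. real_of_int (cc j)) \<sigma> b"
    unfolding gr_solves_def using gr by (intro exI[of _ "\<lambda>j. int (us j)"]) simp
  moreover have "\<exists>!u. ip_optimal d n A (\<lambda>j. real_of_int (cc j)) b u"
    using opt uniq_u by blast
  ultimately show ?thesis by blast
qed

lemma final:
  "\<exists>c :: nat \<Rightarrow> int.
           generic_cost d n A (\<lambda>j. real_of_int (c j)) \<and>
           coarsest_triangulation d n A (Delta_c d n A (\<lambda>j. real_of_int (c j))) \<and>
           gomory_family d n A (\<lambda>j. real_of_int (c j))"
proof (intro exI[of _ cc] conjI)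
  show "generic_cost d n A (\<lambda>j. real_of_int (cc j))"
    unfolding generic_cost_def Delta_cc using triang main_b by blast
  show "coarsest_triangulation d n A (Delta_c d n A (\<lambda>j. real_of_int (cc j)))"
    unfolding Delta_cc by (rule coarsest)
  show "gomory_family d n A (\<lambda>j. real_of_int (cc j))"
    unfolding gomory_family_def Delta_cc maximal_face_def using main_b by blast
qed

end

theorem corollary4p8:
  fixes d n :: nat and A :: "nat \<Rightarrow> nat \<Rightarrow> int"
  assumes "standing_assms d n A"
    and "normal_mat d n A"
    and "simplicial_cone d n A"
  shows "\<exists>c :: nat \<Rightarrow> int.
           generic_cost d n A (\<lambda>j. real_of_int (c j)) \<and>
           coarsest_triangulation d n A (Delta_c d n A (\<lambda>j. real_of_int (c j))) \<and>
           gomory_family d n A (\<lambda>j. real_of_int (c j))"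
proof -
  obtain \<sigma> where s1: "\<sigma> \<subseteq> {..<n}" and s2: "lin_indep_cols d (RA A) \<sigma>"
    and s3: "\<forall>b. rcone d (RA A) \<sigma> b \<longleftrightarrow> rcone d (RA A) {..<n} b"
    using exists_sigma[OF assms(3)] by blast
  interpret sig d n A \<sigma>
    by unfold_locales (use assms s1 s2 s3 in auto)
  show ?thesis by (rule final)
qed

end
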